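(* Let $G$ be a finite group such that $|Z(G)|$ has at least two distinct prime divisors. Then the difference graph $\mathcal{D}(G)$ is connected if and only if $G$ is not isomorphic to $\mathbb{Z}_{pq}$ for primes $p,q$. Moreover, when $\mathcal{D}(G)$ is connected, its diameter is at most $6$.
   Context: For a finite group $G$ with identity $e$: the intersection power graph $\mathcal{G}_I(G)$ has vertex set $G$, two distinct non-identity vertices $x,y$ being adjacent iff $\langle x\rangle\cap\langle y\rangle\neq\{e\}$, and $e$ being adjacent to every other vertex. The power graph $\mathcal{P}(G)$ has vertex set $G$, two distinct vertices being adjacent iff one is a power of the other. The difference graph $\mathcal{D}(G)$ is the graph on vertex set $G$ with edge set $E(\mathcal{G}_I(G))\setminus E(\mathcal{P}(G))$, with all isolated vertices removed. $Z(G)$ denotes the center of $G$. *)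

theory Defs
  imports "HOL-Algebra.Algebra" "HOL-Computational_Algebra.Primes"
begin

definition grp_center :: "('a, 'b) monoid_scheme \<Rightarrow> 'a set" where
  "grp_center G = {z \<in> carrier G. \<forall>x \<in> carrier G. z \<otimes>\<^bsub>G\<^esub> x = x \<otimes>\<^bsub>G\<^esub> z}"

definition ipg_edge :: "('a, 'b) monoid_scheme \<Rightarrow> 'a \<Rightarrow> 'a \<Rightarrow> bool" where
  "ipg_edge G x y \<longleftrightarrow> x \<in> carrier G \<and> y \<in> carrier G \<and> x \<noteq> y \<and>
     (x = \<one>\<^bsub>G\<^esub> \<or> y = \<one>\<^bsub>G\<^esub> \<or>
      generate G {x} \<inter> generate G {y} \<noteq> {\<one>\<^bsub>G\<^esub>})"

definition pg_edge :: "('a, 'b) monoid_scheme \<Rightarrow> 'a \<Rightarrow> 'a \<Rightarrow> bool" where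
  "pg_edge G x y \<longleftrightarrow> x \<in> carrier G \<and> y \<in> carrier G \<and> x \<noteq> y \<and>
     ((\<exists>k::int. y = x [^]\<^bsub>G\<^esub> k) \<or> (\<exists>k::int. x = y [^]\<^bsub>G\<^esub> k))"

definition diff_edge :: "('a, 'b) monoid_scheme \<Rightarrow> 'a \<Rightarrow> 'a \<Rightarrow> bool" where
  "diff_edge G x y \<longleftrightarrow> ipg_edge G x y \<and> \<not> pg_edge G x y"

definition diff_vertices :: "('a, 'b) monoid_scheme \<Rightarrow> 'a set" where
  "diff_vertices G = {x \<in> carrier G. \<exists>y. diff_edge G x y}"

text \<open>Walks in a graph given by an edge relation: a list of vertices, consecutive
  ones adjacent.  A walk from u to v of length n (n edges).\<close>
definition is_walk :: "('a \<Rightarrow> 'a \<Rightarrow> bool) \<Rightarrow> 'a list \<Rightarrow> 'a \<Rightarrow> 'a \<Rightarrow> bool" where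
  "is_walk E xs u v \<longleftrightarrow> xs \<noteq> [] \<and> hd xs = u \<and> last xs = v \<and>
     (\<forall>i. Suc i < length xs \<longrightarrow> E (xs ! i) (xs ! Suc i))"

definition graph_connected :: "'a set \<Rightarrow> ('a \<Rightarrow> 'a \<Rightarrow> bool) \<Rightarrow> bool" where
  "graph_connected V E \<longleftrightarrow> V \<noteq> {} \<and> (\<forall>u\<in>V. \<forall>v\<in>V. \<exists>xs. is_walk E xs u v)"

definition graph_diam_le :: "'a set \<Rightarrow> ('a \<Rightarrow> 'a \<Rightarrow> bool) \<Rightarrow> nat \<Rightarrow> bool" where
  "graph_diam_le V E d \<longleftrightarrow>
     (\<forall>u\<in>V. \<forall>v\<in>V. \<exists>xs. is_walk E xs u v \<and> length xs \<le> Suc d)"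

end

theory Submission
  imports Defs "HOL-Algebra.Multiplicative_Group"
begin

lemma dvd_prime_prod:
  fixes d r s :: nat
  assumes "Factorial_Ring.prime r" "Factorial_Ring.prime s" "d dvd r * s"
  shows "d = 1 \<or> Factorial_Ring.prime d \<or> d = r * s"
proof (cases "r dvd d")
  case True
  then obtain d' where d: "d = r * d'" by blast
  then have "d' dvd s" using assms(3) assms(1) by (simp add: nat_mult_dvd_cancel_disj)
  then have "d' = 1 \<or> d' = s" using assms(2) prime_nat_iff by blast
  then show ?thesis using d assms by auto
next
  case False
  then have "coprime d r" using assms(1) prime_imp_coprime coprime_commute by blast
  then have "d dvd s" using assms(3) using coprime_dvd_mult_right_iff by blast
  then have "d = 1 \<or> d = s" using assms(2) prime_nat_iff by blast
  then show ?thesis using assms by auto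
qed



lemma is_walk_single: "is_walk E [x] u v \<longleftrightarrow> x = u \<and> x = v"
  unfolding is_walk_def by auto

lemma is_walk_Cons2:
  "is_walk E (x # y # zs) u v \<longleftrightarrow> x = u \<and> E x y \<and> is_walk E (y # zs) y v"
proof
  assume w: "is_walk E (x # y # zs) u v"
  have "Suc 0 < length (x # y # zs)" by simp
  then have "E ((x # y # zs) ! 0) ((x # y # zs) ! Suc 0)" using w unfolding is_walk_def by blast
  then have "E x y" by simp
  moreover have "\<forall>i. Suc i < length (y # zs) \<longrightarrow> E ((y # zs) ! i) ((y # zs) ! Suc i)"
  proof (intro allI impI)
    fix i assume "Suc i < length (y # zs)"
    then have "Suc (Suc i) < length (x # y # zs)" by simp
    then have "E ((x # y # zs) ! Suc i) ((x # y # zs) ! Suc (Suc i))" using w unfolding is_walk_def by blast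
    then show "E ((y # zs) ! i) ((y # zs) ! Suc i)" by simp
  qed
  ultimately show "x = u \<and> E x y \<and> is_walk E (y # zs) y v" using w unfolding is_walk_def by simp
next
  assume r: "x = u \<and> E x y \<and> is_walk E (y # zs) y v"
  have "\<forall>i. Suc i < length (x # y # zs) \<longrightarrow> E ((x # y # zs) ! i) ((x # y # zs) ! Suc i)"
  proof (intro allI impI)
    fix i assume i: "Suc i < length (x # y # zs)"
    show "E ((x # y # zs) ! i) ((x # y # zs) ! Suc i)"
    proof (cases i)
      case 0 then show ?thesis using r by auto
    next
      case (Suc j)
      then have "Suc j < length (y # zs)" using i by simp
      then have "E ((y # zs) ! j) ((y # zs) ! Suc j)" using r unfolding is_walk_def by blast
      then show ?thesis using Suc by simp
    qed
  qed
  then show "is_walk E (x # y # zs) u v" using r unfolding is_walk_def by simp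
qed

lemma walk_append:
  "is_walk E xs u v \<Longrightarrow> is_walk E ys v w \<Longrightarrow> is_walk E (xs @ tl ys) u w"
proof (induction xs arbitrary: u)
  case Nil then show ?case by (simp add: is_walk_def)
next
  case (Cons x xs)
  note w1 = Cons.prems(1) and w2 = Cons.prems(2) and IH = Cons.IH
  show ?case
  proof (cases xs)
    case Nil
    then have "x = u" "x = v" using w1 unfolding is_walk_def by auto
    moreover have "ys = v # tl ys" using w2 unfolding is_walk_def by (cases ys) auto
    ultimately have "(x # xs) @ tl ys = ys" using Nil by simp
    then show ?thesis using w2 \<open>x = u\<close> \<open>x = v\<close> unfolding is_walk_def by simp
  next
    case (Cons y zs)
    have w3: "is_walk E (x # y # zs) u v" using w1 Cons by simp
    have "x = u \<and> E x y \<and> is_walk E (y # zs) y v" using w3 is_walk_Cons2 by metis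
    then have a: "x = u" "E x y" "is_walk E (y # zs) y v" by blast+
    then have "is_walk E ((y # zs) @ tl ys) y w" using IH w2 Cons by blast
    then have "is_walk E (x # y # (zs @ tl ys)) u w" using a is_walk_Cons2 by (metis append_Cons)
    then show ?thesis using Cons by simp
  qed
qed

lemma walk_rev:
  assumes sym: "\<And>x y. E x y \<Longrightarrow> E y x"
  shows "is_walk E xs u v \<Longrightarrow> is_walk E (rev xs) v u"
proof (induction xs arbitrary: u)
  case Nil then show ?case by (simp add: is_walk_def)
next
  case (Cons x xs)
  note w1 = Cons.prems(1) and IH = Cons.IH
  show ?case
  proof (cases xs)
    case Nil
    then show ?thesis using w1 unfolding is_walk_def by auto
  next
    case (Cons y zs)
    have w3: "is_walk E (x # y # zs) u v" using w1 Cons by simp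
    have "x = u \<and> E x y \<and> is_walk E (y # zs) y v" using w3 is_walk_Cons2 by metis
    then have a: "x = u" "E x y" "is_walk E (y # zs) y v" by blast+
    then have r: "is_walk E (rev (y # zs)) v y" using IH Cons by blast
    have "is_walk E [x] x x" unfolding is_walk_def by simp
    then have "is_walk E [y, x] y x" using a(2) sym is_walk_Cons2 by metis
    then have "is_walk E (rev (y # zs) @ tl [y, x]) v x" by (rule walk_append[OF r])
    then show ?thesis using Cons a(1) by simp
  qed
qed


lemma walk2: "E x y \<Longrightarrow> is_walk E [x, y] x y"
  by (simp add: is_walk_Cons2 is_walk_single)
lemma walk3: "E x y \<Longrightarrow> E y z \<Longrightarrow> is_walk E [x, y, z] x z"
  by (simp add: is_walk_Cons2 is_walk_single)
lemma walk4: "E x y \<Longrightarrow> E y z \<Longrightarrow> E z w \<Longrightarrow> is_walk E [x, y, z, w] x w"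
  by (simp add: is_walk_Cons2 is_walk_single)

context group begin

abbreviation cyc where "cyc x \<equiv> generate G {x}"

lemma cyc_pow: "x \<in> carrier G \<Longrightarrow> y \<in> cyc x \<longleftrightarrow> (\<exists>k::int. y = x [^] k)"
  using generate_pow by auto

lemma cyc_sub: "x \<in> carrier G \<Longrightarrow> subgroup (cyc x) G"
  by (simp add: generate_is_subgroup)

lemma cyc_self: "x \<in> carrier G \<Longrightarrow> x \<in> cyc x" by (rule generate.incl) simp
lemma cyc_one: "\<one> \<in> cyc x" by (rule generate.one)
lemma cyc_powI: "x \<in> carrier G \<Longrightarrow> x [^] (k::int) \<in> cyc x" using cyc_pow by blast
lemma cyc_carrier: "x \<in> carrier G \<Longrightarrow> y \<in> cyc x \<Longrightarrow> y \<in> carrier G"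
  using cyc_pow by auto
lemma cyc_subI: "subgroup H G \<Longrightarrow> y \<in> H \<Longrightarrow> cyc y \<subseteq> H"
  using generate_subgroup_incl by auto
lemma cyc_mono: "x \<in> carrier G \<Longrightarrow> y \<in> cyc x \<Longrightarrow> cyc y \<subseteq> cyc x"
  using cyc_subI cyc_sub by blast

lemma one_lemma:
  assumes "c \<in> carrier G" "c [^] (m::int) = \<one>" "c [^] (r::int) = \<one>" "coprime m r"
  shows "c = \<one>"
proof -
  have "int (ord c) dvd m" "int (ord c) dvd r" using assms int_pow_eq_id by auto
  then have "is_unit (int (ord c))" using assms(4) coprime_common_divisor by blast
  then have "ord c = 1" by simp
  thus ?thesis using ord_eq_1 assms(1) by blast
qed

lemma invpow:
  assumes "c \<in> carrier G" "c [^] (r::int) = \<one>" "coprime m r"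
  shows "\<exists>s::int. c = (c [^] m) [^] s"
proof -
  obtain u v where uv: "u*m + v*r = gcd m r" using bezout_int by blast
  then have uv1: "u*m + v*r = 1" using assms(3) by (simp add: coprime_iff_gcd_eq_1)
  have "int (ord c) dvd r" using assms int_pow_eq_id by auto
  then have "int (ord c) dvd (1 - m*u)" using uv1
    by (metis add_diff_cancel_left' dvd_mult mult.commute)
  then have "c [^] (m*u) = c [^] (1::int)" using int_pow_eq assms(1) by blast
  then show ?thesis using int_pow_pow assms(1) by (metis int_pow_1)
qed


lemma po_lemma:
  assumes "g \<in> carrier G" "Factorial_Ring.prime r" "g [^] (int r) = \<one>" "g [^] (k::int) \<noteq> \<one>"
  shows "g \<in> cyc (g [^] k)"
proof -
  have "int (ord g) dvd int r" using assms int_pow_eq_id by auto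
  have "\<not> int r dvd k"
  proof
    assume "int r dvd k"
    then have "int (ord g) dvd k" using \<open>int (ord g) dvd int r\<close> dvd_trans by blast
    then show False using assms int_pow_eq_id by auto
  qed
  moreover have "Factorial_Ring.prime (int r)" using assms(2) by simp
  ultimately have "coprime (int r) k" using prime_imp_coprime by blast
  then have "coprime k (int r)" using coprime_commute by blast
  then obtain s :: int where "g = (g [^] k) [^] s" using invpow[OF assms(1) assms(3)] by blast
  then show ?thesis using cyc_powI[of "g [^] k" s] assms(1) by simp
qed

lemma gen_lemma:
  assumes "g \<in> carrier G" "c \<in> cyc g" "c [^] (r::int) = \<one>" "coprime m r"
  shows "c \<in> cyc (g [^] m)"
proof -
  obtain j :: int where j: "c = g [^] j" using cyc_pow assms by blast
  have cc: "c \<in> carrier G" using j assms by simp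
  obtain s :: int where "c = (c [^] m) [^] s" using invpow[OF cc assms(3) assms(4)] by blast
  also have "\<dots> = g [^] (j * m * s)" using j assms(1) by (simp add: int_pow_pow)
  also have "\<dots> = (g [^] m) [^] (j * s)" using assms(1) by (simp add: int_pow_pow mult_ac)
  finally show ?thesis using cyc_powI[of "g [^] m" "j * s"] assms(1) by simp
qed

lemma notin_lemma:
  assumes "z \<in> carrier G" "z [^] (m::int) = \<one>" "c \<in> cyc z"
  shows "c [^] m = \<one>"
proof -
  obtain k :: int where "c = z [^] k" using cyc_pow assms by blast
  then have "c [^] m = z [^] (k * m)" using assms(1) by (simp add: int_pow_pow)
  also have "\<dots> = (z [^] m) [^] k" using assms(1) by (simp add: int_pow_pow mult_ac)
  finally have "c [^] m = (z [^] m) [^] k" .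
  then show ?thesis using assms by simp
qed

lemma ord_prime_pow:
  assumes "u \<in> carrier G" "Factorial_Ring.prime (ord u)"
  shows "u [^] int (ord u) = \<one>" "u \<noteq> \<one>"
  using assms by (auto simp: int_pow_int)

lemma exists_prime_elem:
  assumes fin: "finite (carrier G)" and x: "x \<in> carrier G" "x \<noteq> \<one>"
  shows "\<exists>u. u \<in> cyc x \<and> Factorial_Ring.prime (ord u) \<and> (x \<in> cyc u \<longrightarrow> Factorial_Ring.prime (ord x))"
proof -
  have "ord x \<noteq> 1" using x ord_eq_1 by blast
  then obtain r where r: "Factorial_Ring.prime r" "r dvd ord x" using prime_factor_nat by blast
  have o0: "ord x \<noteq> 0" using ord_ge_1[OF fin x(1)] by simp
  define u where "u = x [^] (ord x div r)"
  obtain m where m: "ord x = r * m" using r by blast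
  have m0: "m \<noteq> 0" using m o0 by auto
  have r0: "r \<noteq> 0" using r by auto
  have "ord x div r = m" using m r0 by simp
  then have ou: "ord u = r" unfolding u_def using ord_pow[OF x(1), of m] m m0 by simp
  have uc: "u \<in> cyc x" unfolding u_def using x cyc_powI[of x "int (ord x div r)"] by (simp add: int_pow_int)
  have "Factorial_Ring.prime (ord x)" if "x \<in> cyc u"
  proof -
    have uu: "u \<in> carrier G" using uc x cyc_carrier by blast
    have "u [^] int r = \<one>" using ou pow_ord_eq_1[OF uu] by (simp add: int_pow_int)
    then have "x [^] int r = \<one>" using notin_lemma[OF uu _ that] by simp
    then have "int (ord x) dvd int r" using int_pow_eq_id x by blast
    then have "ord x dvd r" by simp
    then have "ord x = r" using r(1) \<open>ord x \<noteq> 1\<close> prime_nat_iff by blast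
    then show ?thesis using r by simp
  qed
  then show ?thesis using uc ou r by blast
qed

lemma subgroup_card_dvd:
  assumes fin: "finite (carrier G)" and "subgroup K G" "subgroup H G" "K \<subseteq> H"
  shows "card K dvd card H"
proof -
  have K: "subgroup K (G\<lparr>carrier := H\<rparr>)" using subgroup_incl assms by blast
  have gH: "group (G\<lparr>carrier := H\<rparr>)" using assms(3) subgroup_imp_group by blast
  have "card (rcosets\<^bsub>G\<lparr>carrier := H\<rparr>\<^esub> K) * card K = order (G\<lparr>carrier := H\<rparr>)"
    using group.lagrange[OF gH K] .
  then show ?thesis unfolding order_def by (simp, metis dvd_triv_right)
qed


lemma card_two_le:
  assumes "finite K" "\<one> \<in> K" "z \<in> K" "z \<noteq> \<one>"
  shows "2 \<le> card K"
proof -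
  have "card {\<one>, z} \<le> card K" using assms by (intro card_mono) auto
  then show ?thesis using assms(4) by simp
qed

lemma pq_lemma:
  assumes fin: "finite (carrier G)" and H: "subgroup H G" "card H = r * s"
    "Factorial_Ring.prime r" "Factorial_Ring.prime s"
    and K: "subgroup K G" "K \<subseteq> H" and L: "subgroup L G" "L \<subseteq> H"
    and z: "z \<in> K" "z \<in> L" "z \<noteq> \<one>"
  shows "K \<subseteq> L \<or> L \<subseteq> K"
proof -
  have fH: "finite H" using H(1) fin subgroup.subset finite_subset by blast
  have fK: "finite K" using fH K(2) finite_subset by blast
  have cK: "card K = 1 \<or> Factorial_Ring.prime (card K) \<or> card K = r * s"
    using dvd_prime_prod subgroup_card_dvd[OF fin K(1) H(1) K(2)] H by simp
  have "2 \<le> card K" using card_two_le[OF fK subgroup.one_closed[OF K(1)] z(1) z(3)] .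
  then consider "card K = r * s" | "Factorial_Ring.prime (card K)" using cK by linarith
  then show ?thesis
  proof cases
    case 1
    then have "K = H" using card_subset_eq[OF fH K(2)] H(2) by simp
    then show ?thesis using L(2) by blast
  next
    case 2
    have KL: "subgroup (K \<inter> L) G" using subgroups_Inter_pair K(1) L(1) by blast
    have fKL: "finite (K \<inter> L)" using fK by simp
    have "card (K \<inter> L) dvd card K"
      using subgroup_card_dvd[OF fin KL K(1)] by simp
    moreover have "2 \<le> card (K \<inter> L)" using card_two_le[OF fKL _ _ z(3)] z(1,2)
        subgroup.one_closed[OF K(1)] subgroup.one_closed[OF L(1)] by simp
    moreover have "card (K \<inter> L) = 1 \<or> card (K \<inter> L) = card K"
      using 2 \<open>card (K \<inter> L) dvd card K\<close> prime_nat_iff by blast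
    ultimately have "card (K \<inter> L) = card K" by linarith
    then have "K \<inter> L = K" using card_subset_eq[OF fK] by blast
    then show ?thesis by blast
  qed
qed

lemma diff_edge_iff:
  "diff_edge G x y \<longleftrightarrow> x \<in> carrier G \<and> y \<in> carrier G \<and>
     (\<exists>z. z \<noteq> \<one> \<and> z \<in> cyc x \<and> z \<in> cyc y) \<and> x \<notin> cyc y \<and> y \<notin> cyc x"
proof
  assume d: "diff_edge G x y"
  then have xy: "x \<in> carrier G" "y \<in> carrier G" "x \<noteq> y"
    unfolding diff_edge_def ipg_edge_def by auto
  have n1: "x \<notin> cyc y" "y \<notin> cyc x" using d xy unfolding diff_edge_def pg_edge_def
    by (auto simp: cyc_pow)
  have "x \<noteq> \<one>" "y \<noteq> \<one>" using n1 cyc_one by auto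
  then have "cyc x \<inter> cyc y \<noteq> {\<one>}" using d unfolding diff_edge_def ipg_edge_def by auto
  then have "\<exists>z. z \<noteq> \<one> \<and> z \<in> cyc x \<and> z \<in> cyc y" using cyc_one by blast
  then show "x \<in> carrier G \<and> y \<in> carrier G \<and>
     (\<exists>z. z \<noteq> \<one> \<and> z \<in> cyc x \<and> z \<in> cyc y) \<and> x \<notin> cyc y \<and> y \<notin> cyc x"
    using xy n1 by blast
next
  assume r: "x \<in> carrier G \<and> y \<in> carrier G \<and>
     (\<exists>z. z \<noteq> \<one> \<and> z \<in> cyc x \<and> z \<in> cyc y) \<and> x \<notin> cyc y \<and> y \<notin> cyc x"
  then have "x \<noteq> y" using cyc_self by blast
  moreover have "cyc x \<inter> cyc y \<noteq> {\<one>}" using r by blast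
  moreover have "\<not> pg_edge G x y" using r unfolding pg_edge_def by (auto simp: cyc_pow)
  ultimately show "diff_edge G x y" using r unfolding diff_edge_def ipg_edge_def by blast
qed

lemma diff_edge_sym: "diff_edge G x y \<Longrightarrow> diff_edge G y x"
  unfolding diff_edge_iff by blast

lemma diff_vertices_iff: "x \<in> diff_vertices G \<longleftrightarrow> (\<exists>y. diff_edge G x y)"
  unfolding diff_vertices_def using diff_edge_iff by blast

lemma vertex_prime_elem:
  assumes fin: "finite (carrier G)" and x: "x \<in> diff_vertices G"
  shows "\<exists>u. u \<in> cyc x \<and> Factorial_Ring.prime (ord u) \<and> x \<notin> cyc u"
proof -
  obtain y where e: "diff_edge G x y" using x diff_vertices_iff by blast
  then have xc: "x \<in> carrier G" and x1: "x \<noteq> \<one>" using diff_edge_iff cyc_one by auto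
  obtain u where u: "u \<in> cyc x" "Factorial_Ring.prime (ord u)"
     "x \<in> cyc u \<longrightarrow> Factorial_Ring.prime (ord x)"
    using exists_prime_elem[OF fin xc x1] by blast
  have "x \<notin> cyc u"
  proof
    assume "x \<in> cyc u"
    then have px: "Factorial_Ring.prime (ord x)" using u by blast
    obtain z where z: "z \<noteq> \<one>" "z \<in> cyc x" "z \<in> cyc y" using e diff_edge_iff by blast
    obtain k :: int where k: "z = x [^] k" using z cyc_pow xc by blast
    have "x \<in> cyc z" using po_lemma[OF xc px _, of k] k z pow_ord_eq_1[OF xc] by (simp add: int_pow_int)
    moreover have "cyc z \<subseteq> cyc y" using cyc_mono z e diff_edge_iff by blast
    ultimately show False using e diff_edge_iff by blast
  qed
  then show ?thesis using u by blast
qed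

lemma center_sub: "subgroup (grp_center G) G"
proof (rule subgroupI)
  show "grp_center G \<subseteq> carrier G" unfolding grp_center_def by blast
  show "grp_center G \<noteq> {}" unfolding grp_center_def by auto
next
  fix z assume z: "z \<in> grp_center G"
  then have zc: "z \<in> carrier G" and comm: "\<And>x. x \<in> carrier G \<Longrightarrow> z \<otimes> x = x \<otimes> z"
    unfolding grp_center_def by auto
  have "inv z \<otimes> x = x \<otimes> inv z" if x: "x \<in> carrier G" for x
  proof -
    have "inv z \<otimes> x = inv z \<otimes> x \<otimes> (z \<otimes> inv z)" using zc x by simp
    also have "\<dots> = inv z \<otimes> (x \<otimes> z) \<otimes> inv z" using zc x by (simp add: m_assoc)
    also have "\<dots> = inv z \<otimes> (z \<otimes> x) \<otimes> inv z" using comm x by simp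
    also have "\<dots> = x \<otimes> inv z" using zc x by (simp add: m_assoc[symmetric])
    finally show ?thesis .
  qed
  then show "inv z \<in> grp_center G" unfolding grp_center_def using zc by simp
next
  fix y z assume "y \<in> grp_center G" "z \<in> grp_center G"
  then have c: "y \<in> carrier G" "z \<in> carrier G" and cy: "\<And>x. x \<in> carrier G \<Longrightarrow> y \<otimes> x = x \<otimes> y"
    and cz: "\<And>x. x \<in> carrier G \<Longrightarrow> z \<otimes> x = x \<otimes> z"
    unfolding grp_center_def by auto
  have "y \<otimes> z \<otimes> x = x \<otimes> (y \<otimes> z)" if x: "x \<in> carrier G" for x
  proof -
    have "y \<otimes> z \<otimes> x = y \<otimes> (x \<otimes> z)" using c x cz by (simp add: m_assoc)
    also have "\<dots> = (y \<otimes> x) \<otimes> z" using c x by (simp add: m_assoc)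
    also have "\<dots> = x \<otimes> y \<otimes> z" using cy x by simp
    also have "\<dots> = x \<otimes> (y \<otimes> z)" using c x by (simp add: m_assoc)
    finally show ?thesis .
  qed
  then show "y \<otimes> z \<in> grp_center G" unfolding grp_center_def using c by simp
qed

lemma center_elem:
  assumes fin: "finite (carrier G)" and p: "Factorial_Ring.prime p" and d: "p dvd card (grp_center G)"
  shows "\<exists>a \<in> grp_center G. a \<noteq> \<one> \<and> a [^] int p = \<one>"
proof -
  let ?Z = "grp_center G"
  have Zs: "subgroup ?Z G" by (rule center_sub)
  have gZ: "group (G\<lparr>carrier := ?Z\<rparr>)" using subgroup_imp_group[OF Zs] .
  have finZ: "finite (carrier (G\<lparr>carrier := ?Z\<rparr>))" using fin subgroup.subset[OF Zs] finite_subset by auto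
  obtain m where m: "card ?Z = p * m" using d by blast
  have "order (G\<lparr>carrier := ?Z\<rparr>) = p ^ 1 * m" unfolding order_def using m by simp
  then obtain H where H: "subgroup H (G\<lparr>carrier := ?Z\<rparr>)" "card H = p ^ 1"
    using sylow_thm[OF p gZ _ finZ] by blast
  have gH: "group (G\<lparr>carrier := H\<rparr>)" using group.subgroup_imp_group[OF gZ H(1)] by simp
  have HZ: "H \<subseteq> ?Z" using subgroup.subset[OF H(1)] by simp
  have "card H \<ge> 2" using H(2) p prime_ge_2_nat by simp
  then obtain x where x: "x \<in> H" "x \<noteq> \<one>"
  proof -
    assume r: "\<And>x. x \<in> H \<Longrightarrow> x \<noteq> \<one> \<Longrightarrow> thesis"
    show thesis
    proof (rule ccontr)
      assume "\<not> thesis"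
      then have "H \<subseteq> {\<one>}" using r by blast
      then have "card H \<le> 1" using card_mono[of "{\<one>}" H] by simp
      then show False using \<open>card H \<ge> 2\<close> by simp
    qed
  qed
  have "x [^]\<^bsub>G\<lparr>carrier := H\<rparr>\<^esub> order (G\<lparr>carrier := H\<rparr>) = \<one>\<^bsub>G\<lparr>carrier := H\<rparr>\<^esub>"
    using group.pow_order_eq_1[OF gH] x by simp
  then have "x [^] p = \<one>" using H(2) nat_pow_consistent[of x p H] unfolding order_def by simp
  then show ?thesis using x HZ by (auto simp: int_pow_int)
qed

lemma no_vertices:
  assumes fin: "finite (carrier G)" and o: "order G = r * s"
    and r: "Factorial_Ring.prime r" and s: "Factorial_Ring.prime s"
  shows "diff_vertices G = {}"
proof (rule ccontr)
  assume "diff_vertices G \<noteq> {}"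
  then obtain x y where e: "diff_edge G x y" using diff_vertices_iff by blast
  then obtain z where z: "z \<noteq> \<one>" "z \<in> cyc x" "z \<in> cyc y" and c: "x \<in> carrier G" "y \<in> carrier G"
    and n: "x \<notin> cyc y" "y \<notin> cyc x" unfolding diff_edge_iff by blast
  have "card (carrier G) = r * s" using o unfolding order_def .
  moreover have "cyc x \<subseteq> carrier G" "cyc y \<subseteq> carrier G" using cyc_carrier c by blast+
  ultimately have "cyc x \<subseteq> cyc y \<or> cyc y \<subseteq> cyc x"
    using pq_lemma[OF fin subgroup_self _ r s cyc_sub[OF c(1)] _ cyc_sub[OF c(2)] _ z(2) z(3) z(1)] by blast
  then show False using n cyc_self c by blast
qed

end

locale dset = group +
  fixes p q :: nat and a b
  assumes fin: "finite (carrier G)"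
    and pp: "Factorial_Ring.prime p" and qp: "Factorial_Ring.prime q" and pq: "p \<noteq> q"
    and ac: "a \<in> carrier G" and bc: "b \<in> carrier G"
    and a1: "a \<noteq> \<one>" and b1: "b \<noteq> \<one>"
    and ap: "a [^] int p = \<one>" and bq: "b [^] int q = \<one>"
    and acomm: "\<And>x. x \<in> carrier G \<Longrightarrow> a \<otimes> x = x \<otimes> a"
    and bcomm: "\<And>x. x \<in> carrier G \<Longrightarrow> b \<otimes> x = x \<otimes> b"
begin

abbreviation "h \<equiv> a \<otimes> b"
abbreviation "C \<equiv> cyc h"

lemma hc: "h \<in> carrier G" using ac bc by simp

lemma cop: "coprime (int p) (int q)" "coprime (int q) (int p)"
  using primes_coprime[OF pp qp pq] coprime_commute by auto

lemma hpow: "h [^] (k::int) = a [^] k \<otimes> b [^] k"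
  using int_pow_mult_distrib acomm ac bc by blast

lemma Csub: "subgroup C G" using cyc_sub hc by blast

lemma ord_a: "ord a = p"
proof -
  have "int (ord a) dvd int p" using ap int_pow_eq_id ac by blast
  then have "ord a dvd p" by simp
  moreover have "ord a \<noteq> 1" using a1 ord_eq_1 ac by blast
  ultimately show ?thesis using pp prime_nat_iff by blast
qed

lemma ord_b: "ord b = q"
proof -
  have "int (ord b) dvd int q" using bq int_pow_eq_id bc by blast
  then have "ord b dvd q" by simp
  moreover have "ord b \<noteq> 1" using b1 ord_eq_1 bc by blast
  ultimately show ?thesis using qp prime_nat_iff by blast
qed

lemma a_in_C: "a \<in> C"
proof -
  have "h [^] int q = a [^] int q" using hpow bq ac by simp
  obtain s :: int where "a = (a [^] int q) [^] s" using invpow[OF ac ap cop(2)] by blast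
  then have "a = (h [^] int q) [^] s" using \<open>h [^] int q = a [^] int q\<close> by simp
  then have "a = h [^] (int q * s)" using hc by (simp add: int_pow_pow)
  then show ?thesis using cyc_powI hc by metis
qed

lemma b_in_C: "b \<in> C"
proof -
  have "h [^] int p = b [^] int p" using hpow ap bc by simp
  obtain s :: int where "b = (b [^] int p) [^] s" using invpow[OF bc bq cop(1)] by blast
  then have "b = (h [^] int p) [^] s" using \<open>h [^] int p = b [^] int p\<close> by simp
  then have "b = h [^] (int p * s)" using hc by (simp add: int_pow_pow)
  then show ?thesis using cyc_powI hc by metis
qed

lemma a_pow1: "a [^] (int p * k) = \<one>" using ac ap by (simp add: int_pow_pow[symmetric])
lemma b_pow1: "b [^] (int q * k) = \<one>" using bc bq by (simp add: int_pow_pow[symmetric])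

lemma cent:
  assumes z: "z \<in> C" "z \<noteq> \<one>"
  shows "a \<in> cyc z \<or> b \<in> cyc z"
proof -
  obtain k :: int where k: "z = h [^] k" using z cyc_pow hc by blast
  have zc: "z \<in> carrier G" using k hc by simp
  have b1': "b [^] (k * int q) = \<one>" using b_pow1[of k] by (simp add: mult.commute)
  have a1': "a [^] (k * int p) = \<one>" using a_pow1[of k] by (simp add: mult.commute)
  have "z [^] int q = h [^] (k * int q)" using k hc by (simp add: int_pow_pow)
  also have "\<dots> = a [^] (k * int q) \<otimes> b [^] (k * int q)" by (rule hpow)
  also have "\<dots> = a [^] (k * int q)" using b1' ac by simp
  finally have zq: "z [^] int q = a [^] (k * int q)" .
  have "z [^] int p = h [^] (k * int p)" using k hc by (simp add: int_pow_pow)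
  also have "\<dots> = a [^] (k * int p) \<otimes> b [^] (k * int p)" by (rule hpow)
  also have "\<dots> = b [^] (k * int p)" using a1' bc by simp
  finally have zp: "z [^] int p = b [^] (k * int p)" .
  show ?thesis
  proof (cases "a [^] (k * int q) = \<one>")
    case False
    then have "a \<in> cyc (a [^] (k * int q))" using po_lemma[OF ac pp ap] by blast
    moreover have "cyc (a [^] (k * int q)) \<subseteq> cyc z" using zq zc cyc_mono cyc_powI by metis
    ultimately show ?thesis by blast
  next
    case aT: True
    show ?thesis
    proof (cases "b [^] (k * int p) = \<one>")
      case False
      then have "b \<in> cyc (b [^] (k * int p))" using po_lemma[OF bc qp bq] by blast
      moreover have "cyc (b [^] (k * int p)) \<subseteq> cyc z" using zp zc cyc_mono cyc_powI by metis
      ultimately show ?thesis by blast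
    next
      case bT: True
      have "(a [^] k) [^] int q = \<one>" using aT ac by (simp add: int_pow_pow)
      moreover have "(a [^] k) [^] int p = \<one>" using a_pow1[of k] ac by (simp add: int_pow_pow mult.commute)
      ultimately have "a [^] k = \<one>" using one_lemma cop ac by (meson int_pow_closed)
      have "(b [^] k) [^] int p = \<one>" using bT bc by (simp add: int_pow_pow)
      moreover have "(b [^] k) [^] int q = \<one>" using b_pow1[of k] bc by (simp add: int_pow_pow mult.commute)
      ultimately have "b [^] k = \<one>" using one_lemma cop bc by (meson int_pow_closed)
      then have "z = \<one>" using k hpow \<open>a [^] k = \<one>\<close> by simp
      then show ?thesis using z by blast
    qed
  qed
qed

lemma b_notin_a: "b \<notin> cyc a"
proof
  assume "b \<in> cyc a"
  then have "b [^] int p = \<one>" using notin_lemma[OF ac ap] by blast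
  then show False using one_lemma[OF bc _ bq cop(1)] b1 by blast
qed

lemma a_notin_b: "a \<notin> cyc b"
proof
  assume "a \<in> cyc b"
  then have "a [^] int q = \<one>" using notin_lemma[OF bc bq] by blast
  then show False using one_lemma[OF ac ap _ cop(1)] a1 by blast
qed


lemma cd_facts:
  assumes cd: "(c = a \<and> d = b \<and> rc = p \<and> rd = q) \<or> (c = b \<and> d = a \<and> rc = q \<and> rd = p)"
  shows "c \<in> carrier G" "d \<in> carrier G" "c \<noteq> \<one>" "d \<noteq> \<one>" "c [^] int rc = \<one>" "d [^] int rd = \<one>"
    "Factorial_Ring.prime rc" "Factorial_Ring.prime rd" "coprime (int rc) (int rd)"
    "\<And>x. x \<in> carrier G \<Longrightarrow> c \<otimes> x = x \<otimes> c" "c \<in> C" "d \<in> C"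
    "\<And>z. z \<in> C \<Longrightarrow> z \<noteq> \<one> \<Longrightarrow> c \<in> cyc z \<or> d \<in> cyc z"
  using assms ac bc a1 b1 ap bq pp qp cop acomm bcomm a_in_C b_in_C cent by blast+

lemma A_core:
  assumes u: "u \<in> carrier G" "Factorial_Ring.prime (ord u)"
    and cd: "(c = a \<and> d = b \<and> rc = p \<and> rd = q) \<or> (c = b \<and> d = a \<and> rc = q \<and> rd = p)"
    and rne: "ord u \<noteq> rc" and nc: "c \<notin> cyc u" and nd: "d \<notin> cyc u"
  shows "diff_edge G (u \<otimes> c) h" "u \<in> cyc (u \<otimes> c)" "c \<in> cyc (u \<otimes> c)"
proof -
  note F = cd_facts[OF cd]
  define r where "r = ord u"
  define w where "w = u \<otimes> c"
  have wc: "w \<in> carrier G" unfolding w_def using u F by simp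
  have comm: "u \<otimes> c = c \<otimes> u" using F(10) u by simp
  have wpow: "w [^] (k::int) = u [^] k \<otimes> c [^] k" for k
    unfolding w_def using int_pow_mult_distrib[OF comm u(1) F(1)] .
  have ur: "u [^] int r = \<one>" unfolding r_def using u by (simp add: int_pow_int)
  have pr: "Factorial_Ring.prime r" using u r_def by simp
  have crc: "coprime (int r) (int rc)" using primes_coprime[OF pr F(7)] rne r_def by simp
  have cw: "c \<in> cyc w"
  proof -
    obtain s :: int where s: "c = (c [^] int r) [^] s" using invpow[OF F(1) F(5) crc] by blast
    have "w [^] int r = c [^] int r" using wpow ur F(1) by simp
    then have "w [^] (int r * s) = (c [^] int r) [^] s" using wc by (simp add: int_pow_pow[symmetric])
    also have "\<dots> = c" by (rule s[symmetric])
    finally have "c = w [^] (int r * s)" by (rule sym)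
    then show ?thesis using cyc_powI[OF wc, of "int r * s"] by simp
  qed
  have uw: "u \<in> cyc w"
  proof -
    obtain s :: int where s: "u = (u [^] int rc) [^] s"
      using invpow[OF u(1) ur] crc coprime_commute by blast
    have "w [^] int rc = u [^] int rc" using wpow F(5) u(1) by simp
    then have "w [^] (int rc * s) = (u [^] int rc) [^] s" using wc by (simp add: int_pow_pow[symmetric])
    also have "\<dots> = u" by (rule s[symmetric])
    finally have "u = w [^] (int rc * s)" by (rule sym)
    then show ?thesis using cyc_powI[OF wc, of "int rc * s"] by simp
  qed
  have u1: "u \<noteq> \<one>" using u by auto
  have w_notC: "w \<notin> C"
  proof
    assume "w \<in> C"
    then have "u \<in> C" using uw cyc_mono hc by blast
    then show False using F(13)[OF _ u1] nc nd by blast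
  qed
  have h_notw: "h \<notin> cyc w"
  proof
    assume "h \<in> cyc w"
    then have "d \<in> cyc w" using F(12) cyc_mono wc by blast
    then obtain k :: int where k: "d = w [^] k" using cyc_pow wc by blast
    then have dk: "d = u [^] k \<otimes> c [^] k" using wpow by simp
    have "u [^] k = d \<otimes> inv (c [^] k)" using dk u(1) F(1) by (simp add: m_assoc)
    moreover have "c [^] k \<in> C" using subgroup_int_pow_closed[OF Csub F(11)] by blast
    then have "inv (c [^] k) \<in> C" using subgroup.m_inv_closed[OF Csub] by blast
    then have "d \<otimes> inv (c [^] k) \<in> C" using subgroup.m_closed[OF Csub F(12)] by blast
    ultimately have ukC: "u [^] k \<in> C" by simp
    show False
    proof (cases "u [^] k = \<one>")
      case False
      then have "c \<in> cyc (u [^] k) \<or> d \<in> cyc (u [^] k)" using F(13) ukC by blast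
      moreover have "cyc (u [^] k) \<subseteq> cyc u" using cyc_mono[OF u(1) cyc_powI[OF u(1)]] by blast
      ultimately show False using nc nd by blast
    next
      case True
      then have "d = c [^] k" using dk F(1) by simp
      then have "d \<in> cyc c" using cyc_powI F(1) by blast
      then have "d [^] int rc = \<one>" using notin_lemma[OF F(1) F(5)] by blast
      then have "d = \<one>" using one_lemma[OF F(2) _ F(6)] F(9) by blast
      then show False using F(4) by blast
    qed
  qed
  have "diff_edge G w h"
    unfolding diff_edge_iff using wc hc w_notC h_notw cw F(11) F(3) by blast
  then show "diff_edge G (u \<otimes> c) h" "u \<in> cyc (u \<otimes> c)" "c \<in> cyc (u \<otimes> c)"
    using uw cw w_def by auto
qed

lemma A_x:
  assumes x: "x \<in> carrier G" "u \<in> cyc x" "x \<notin> cyc u"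
    and u: "Factorial_Ring.prime (ord u)"
    and cd: "(c = a \<and> d = b \<and> rc = p \<and> rd = q) \<or> (c = b \<and> d = a \<and> rc = q \<and> rd = p)"
    and rne: "ord u \<noteq> rc" and nc: "c \<notin> cyc x" and nd: "d \<notin> cyc x"
  shows "diff_edge G x (u \<otimes> c)"
proof -
  note F = cd_facts[OF cd]
  have uc: "u \<in> carrier G" using x cyc_carrier by blast
  have sub: "cyc u \<subseteq> cyc x" using cyc_mono x by blast
  note A = A_core[OF uc u cd rne] 
  have A2: "u \<in> cyc (u \<otimes> c)" "c \<in> cyc (u \<otimes> c)" using A nc nd sub by blast+
  define w where "w = u \<otimes> c"
  have wc: "w \<in> carrier G" unfolding w_def using uc F by simp
  have comm: "u \<otimes> c = c \<otimes> u" using F(10) uc by simp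
  have wpow: "w [^] (k::int) = u [^] k \<otimes> c [^] k" for k
    unfolding w_def using int_pow_mult_distrib[OF comm uc F(1)] .
  have x_notw: "x \<notin> cyc w"
  proof
    assume "x \<in> cyc w"
    then obtain k :: int where k: "x = w [^] k" using cyc_pow wc by blast
    then have xk: "x = u [^] k \<otimes> c [^] k" using wpow by simp
    have "c [^] k = inv (u [^] k) \<otimes> x" using xk uc F(1) by (simp add: m_assoc[symmetric])
    moreover have "u [^] k \<in> cyc x" using sub cyc_powI[OF uc] by blast
    then have "inv (u [^] k) \<in> cyc x" using subgroup.m_inv_closed[OF cyc_sub[OF x(1)]] by blast
    then have "inv (u [^] k) \<otimes> x \<in> cyc x" using subgroup.m_closed[OF cyc_sub[OF x(1)] _ cyc_self[OF x(1)]] by blast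
    ultimately have ckx: "c [^] k \<in> cyc x" by simp
    show False
    proof (cases "c [^] k = \<one>")
      case False
      then have "c \<in> cyc (c [^] k)" using po_lemma[OF F(1) F(7) F(5)] by blast
      moreover have "cyc (c [^] k) \<subseteq> cyc x" using cyc_mono ckx x(1) by blast
      ultimately show False using nc by blast
    next
      case True
      then have "x = u [^] k" using xk uc by simp
      then show False using x(3) cyc_powI uc by blast
    qed
  qed
  have w_notx: "w \<notin> cyc x"
  proof
    assume "w \<in> cyc x"
    then have "c \<in> cyc x" using A2 w_def cyc_mono x(1) by blast
    then show False using nc by blast
  qed
  have "u \<noteq> \<one>" using u uc by auto
  then show ?thesis unfolding diff_edge_iff using x(1) wc x_notw w_notx A2 x(2) w_def by blast
qed

lemma caseA:
  assumes x: "x \<in> diff_vertices G" and na: "a \<notin> cyc x" and nb: "b \<notin> cyc x"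
  shows "\<exists>w. diff_edge G x w \<and> diff_edge G w h"
proof -
  obtain u where u: "u \<in> cyc x" "Factorial_Ring.prime (ord u)" "x \<notin> cyc u"
    using vertex_prime_elem[OF fin x] by blast
  have xc: "x \<in> carrier G" using x unfolding diff_vertices_def by blast
  have uc: "u \<in> carrier G" using u xc cyc_carrier by blast
  have sub: "cyc u \<subseteq> cyc x" using cyc_mono xc u by blast
  show ?thesis
  proof (cases "ord u = p")
    case False
    have cd: "(a = a \<and> b = b \<and> p = p \<and> q = q) \<or> (a = b \<and> b = a \<and> p = q \<and> q = p)" by simp
    show ?thesis using A_x[OF xc u(1) u(3) u(2) cd False na nb] A_core[OF uc u(2) cd False] na nb sub by blast
  next
    case True
    then have ne: "ord u \<noteq> q" using pq by simp
    have cd: "(b = a \<and> a = b \<and> q = p \<and> p = q) \<or> (b = b \<and> a = a \<and> q = q \<and> p = p)" by simp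
    show ?thesis using A_x[OF xc u(1) u(3) u(2) cd ne nb na] A_core[OF uc u(2) cd ne] na nb sub by blast
  qed
qed


lemma split_lemma:
  assumes y: "y \<in> carrier G" "a \<in> cyc y" "b \<in> cyc y" and S: "subgroup S G" "y \<notin> S"
  shows "\<exists>w. w \<in> carrier G \<and> w \<notin> S \<and> ((a \<in> cyc w \<and> b \<notin> cyc w) \<or> (b \<in> cyc w \<and> a \<notin> cyc w))"
proof -
  define n where "n = ord y"
  define e where "e = multiplicity p n"
  have n_ne: "n \<noteq> 0" using ord_ge_1[OF fin y(1)] n_def by simp
  have pu: "\<not> is_unit p" using pp not_prime_unit by blast
  define n' where "n' = n div p ^ e"
  have "\<not> p dvd n'" unfolding n'_def e_def using multiplicity_decompose[OF n_ne pu] .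
  moreover have "n = p ^ e * n'" unfolding n'_def e_def using multiplicity_dvd[of p n] by simp
  ultimately have n: "n = p ^ e * n'" "\<not> p dvd n'" by auto
  have yn: "y [^] (int (p ^ e) * int n') = \<one>"
  proof -
    have "y [^] int n = \<one>" using pow_ord_eq_1[OF y(1)] n_def by (simp add: int_pow_int)
    then show ?thesis using n(1) by simp
  qed
  define y1 where "y1 = y [^] int n'"
  define y2 where "y2 = y [^] int (p ^ e)"
  have y1c: "y1 \<in> carrier G" "y2 \<in> carrier G" using y1_def y2_def y(1) by auto
  have "coprime p n'" using prime_imp_coprime[OF pp n(2)] .
  then have "coprime n' p" using coprime_commute by blast
  then have c1: "coprime (int n') (int p)" by simp
  have "coprime p q" using primes_coprime[OF pp qp pq] .
  then have c2: "coprime (int (p ^ e)) (int q)" by simp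
  have c3: "coprime (int n') (int (p ^ e))" using \<open>coprime n' p\<close> by simp
  have y1e: "y1 [^] int (p ^ e) = \<one>" using yn y(1) unfolding y1_def by (simp add: int_pow_pow mult.commute)
  have y2e: "y2 [^] int n' = \<one>" using yn y(1) unfolding y2_def by (simp add: int_pow_pow)
  show ?thesis
  proof (cases "y2 \<in> S")
    case False
    have "b \<in> cyc y2" unfolding y2_def using gen_lemma[OF y(1) y(3) bq c2] .
    moreover have "a \<notin> cyc y2"
    proof
      assume "a \<in> cyc y2"
      then have "a [^] int n' = \<one>" using notin_lemma[OF y1c(2) y2e] by blast
      then show False using one_lemma[OF ac _ ap c1] a1 by blast
    qed
    ultimately show ?thesis using False y1c by blast
  next
    case y2S: True
    show ?thesis
    proof (cases "y1 \<in> S")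
      case False
      have "a \<in> cyc y1" unfolding y1_def using gen_lemma[OF y(1) y(2) ap c1] .
      moreover have "b \<notin> cyc y1"
      proof
        assume "b \<in> cyc y1"
        then have "b [^] int (p ^ e) = \<one>" using notin_lemma[OF y1c(1) y1e] by blast
        then show False using one_lemma[OF bc _ bq c2] b1 by blast
      qed
      ultimately show ?thesis using False y1c by blast
    next
      case True
      obtain u v :: int where uv: "u * int n' + v * int (p ^ e) = gcd (int n') (int (p ^ e))"
        using bezout_int by blast
      then have uv1: "int n' * u + int (p ^ e) * v = 1" using c3 by (simp add: coprime_iff_gcd_eq_1 mult.commute)
      have "y = y [^] (1::int)" using y(1) by simp
      also have "\<dots> = y [^] (int n' * u) \<otimes> y [^] (int (p ^ e) * v)"
        using int_pow_mult[OF y(1), of "int n' * u" "int (p ^ e) * v"] uv1 by simp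
      also have "\<dots> = y1 [^] u \<otimes> y2 [^] v" unfolding y1_def y2_def using y(1) by (simp add: int_pow_pow)
      finally have "y = y1 [^] u \<otimes> y2 [^] v" .
      moreover have "y1 [^] u \<in> S" "y2 [^] v \<in> S" using True y2S subgroup_int_pow_closed[OF S(1)] by auto
      ultimately have "y \<in> S" using subgroup.m_closed[OF S(1)] by simp
      then show ?thesis using S(2) by blast
    qed
  qed
qed


lemma ord_h: "ord h = p * q"
proof -
  define od where "od = ord h"
  have "h [^] (int p * int q) = a [^] (int p * int q) \<otimes> b [^] (int p * int q)" by (rule hpow)
  also have "\<dots> = \<one>" using a_pow1[of "int q"] b_pow1[of "int p"] ac bc by (simp add: mult.commute)
  finally have "int od dvd int p * int q" using int_pow_eq_id hc od_def by blast
  then have "int od dvd int (p * q)" by simp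
  then have d1: "od dvd p * q" by (simp only: int_dvd_int_iff)
  have ho: "h [^] int od = \<one>" using od_def hc by (simp add: int_pow_int)
  then have ab: "a [^] int od \<otimes> b [^] int od = \<one>" using hpow by simp
  then have "a [^] int od = inv (b [^] int od)" using ac bc by (simp add: inv_equality[symmetric])
  moreover have "inv (b [^] int od) \<in> cyc b" using cyc_powI[OF bc] subgroup.m_inv_closed[OF cyc_sub[OF bc]] by blast
  ultimately have "a [^] int od \<in> cyc b" by simp
  then have "(a [^] int od) [^] int q = \<one>" using notin_lemma[OF bc bq] by blast
  moreover have "(a [^] int od) [^] int p = \<one>" using a_pow1[of "int od"] ac by (simp add: int_pow_pow mult.commute)
  ultimately have ao: "a [^] int od = \<one>" using one_lemma[OF _ _ _ cop(1)] ac by simp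
  then have bo: "b [^] int od = \<one>" using ab bc by simp
  have "int p dvd int od" using ao int_pow_eq_id[OF ac] ord_a by simp
  moreover have "int q dvd int od" using bo int_pow_eq_id[OF bc] ord_b by simp
  ultimately have "int p * int q dvd int od" using cop(1) divides_mult by blast
  then have "int (p * q) dvd int od" by simp
  then have "p * q dvd od" by (simp only: int_dvd_int_iff)
  then show ?thesis using d1 od_def dvd_antisym by blast
qed

lemma cardC: "card C = p * q"
  using generate_pow_card[OF hc] ord_h by simp

lemma hub:
  assumes x: "x \<in> diff_vertices G"
  shows "\<exists>xs. is_walk (diff_edge G) xs x h \<and> length xs \<le> 4"
proof -
  have xc: "x \<in> carrier G" using x unfolding diff_vertices_def by blast
  show ?thesis
  proof (cases "a \<notin> cyc x \<and> b \<notin> cyc x")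
    case True
    then obtain w where e1: "diff_edge G x w" and e2: "diff_edge G w h" using caseA x by blast
    show ?thesis using walk3[of "diff_edge G", OF e1 e2] by (intro exI[of _ "[x, w, h]"]) simp
  next
    case ab: False
    then have common: "\<exists>z. z \<noteq> \<one> \<and> z \<in> cyc x \<and> z \<in> C" using a_in_C b_in_C a1 b1 by blast
    show ?thesis
    proof (cases "x \<in> C")
      case True
      obtain y where e: "diff_edge G x y" using x diff_vertices_iff by blast
      then obtain z where z: "z \<noteq> \<one>" "z \<in> cyc x" "z \<in> cyc y" and yc: "y \<in> carrier G"
        and nxy: "x \<notin> cyc y" "y \<notin> cyc x" unfolding diff_edge_iff by blast
      have xC: "cyc x \<subseteq> C" using cyc_mono hc True by blast
      have "y \<notin> C"
      proof
        assume "y \<in> C"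
        then have yC: "cyc y \<subseteq> C" using cyc_mono hc by blast
        have "cyc x \<subseteq> cyc y \<or> cyc y \<subseteq> cyc x"
          using pq_lemma[OF fin Csub cardC pp qp cyc_sub[OF xc] xC cyc_sub[OF yc] yC z(2) z(3) z(1)] .
        then show False using nxy cyc_self xc yc by blast
      qed
      moreover have "h \<notin> cyc y"
      proof
        assume "h \<in> cyc y"
        then have "C \<subseteq> cyc y" using cyc_mono yc by blast
        then show False using True nxy by blast
      qed
      ultimately have e2: "diff_edge G y h" unfolding diff_edge_iff using yc hc z xC by blast
      show ?thesis using walk3[of "diff_edge G", OF e e2] by (intro exI[of _ "[x, y, h]"]) simp
    next
      case xnC: False
      show ?thesis
      proof (cases "h \<in> cyc x")
        case False
        then have e1: "diff_edge G x h" unfolding diff_edge_iff using xc hc common xnC by blast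
        show ?thesis using walk2[of "diff_edge G", OF e1] by (intro exI[of _ "[x, h]"]) simp
      next
        case True
        then have Cx: "C \<subseteq> cyc x" using cyc_mono xc by blast
        obtain y where e: "diff_edge G x y" using x diff_vertices_iff by blast
        then have yc: "y \<in> carrier G" and nxy: "x \<notin> cyc y" "y \<notin> cyc x" unfolding diff_edge_iff by blast+
        show ?thesis
        proof (cases "a \<notin> cyc y \<and> b \<notin> cyc y")
          case True
          have "y \<in> diff_vertices G" using e diff_edge_sym diff_vertices_iff by blast
          then obtain w where e2: "diff_edge G y w" and e3: "diff_edge G w h" using caseA True by blast
          show ?thesis using walk4[of "diff_edge G", OF e e2 e3] by (intro exI[of _ "[x, y, w, h]"]) simp
        next
          case aby: False
          have ynC: "y \<notin> C" using Cx nxy by blast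
          show ?thesis
          proof (cases "h \<in> cyc y")
            case False
            have "\<exists>z. z \<noteq> \<one> \<and> z \<in> cyc y \<and> z \<in> C" using aby a_in_C b_in_C a1 b1 by blast
            then have e2: "diff_edge G y h" unfolding diff_edge_iff using yc hc ynC False by blast
            show ?thesis using walk3[of "diff_edge G", OF e e2] by (intro exI[of _ "[x, y, h]"]) simp
          next
            case True
            then have "C \<subseteq> cyc y" using cyc_mono yc by blast
            then have "a \<in> cyc y" "b \<in> cyc y" using a_in_C b_in_C by blast+
            then obtain w where w: "w \<in> carrier G" "w \<notin> cyc x"
                "(a \<in> cyc w \<and> b \<notin> cyc w) \<or> (b \<in> cyc w \<and> a \<notin> cyc w)"
              using split_lemma[OF yc _ _ cyc_sub[OF xc] nxy(2)] by blast
            have xw: "x \<notin> cyc w"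
            proof
              assume "x \<in> cyc w"
              then have "cyc x \<subseteq> cyc w" using cyc_mono w(1) by blast
              then show False using w(3) Cx a_in_C b_in_C by blast
            qed
            have hw: "h \<notin> cyc w"
            proof
              assume "h \<in> cyc w"
              then have "C \<subseteq> cyc w" using cyc_mono w(1) by blast
              then show False using w(3) a_in_C b_in_C by blast
            qed
            have cw: "\<exists>z. z \<noteq> \<one> \<and> z \<in> cyc w \<and> z \<in> C" using w(3) a_in_C b_in_C a1 b1 by blast
            have e1: "diff_edge G x w" unfolding diff_edge_iff
              using xc w(1) w(2) xw cw Cx by blast
            have e2: "diff_edge G w h" unfolding diff_edge_iff
              using hc w(1) w(2) hw cw Cx by blast
            show ?thesis using walk3[of "diff_edge G", OF e1 e2] by (intro exI[of _ "[x, w, h]"]) simp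
          qed
        qed
      qed
    qed
  qed
qed

lemma h_vertex:
  assumes g: "g \<in> carrier G" "g \<notin> C"
  shows "h \<in> diff_vertices G"
proof -
  have g1: "g \<noteq> \<one>" using g cyc_one by blast
  show ?thesis
  proof (cases "a \<notin> cyc g \<and> b \<notin> cyc g")
    case True
    obtain u where u: "u \<in> cyc g" "Factorial_Ring.prime (ord u)" using exists_prime_elem[OF fin g(1) g1] by blast
    have uc: "u \<in> carrier G" using u g cyc_carrier by blast
    have "cyc u \<subseteq> cyc g" using cyc_mono g u by blast
    then have na: "a \<notin> cyc u" "b \<notin> cyc u" using True by blast+
    have "\<exists>w. diff_edge G w h"
    proof (cases "ord u = p")
      case False
      have cd: "(a = a \<and> b = b \<and> p = p \<and> q = q) \<or> (a = b \<and> b = a \<and> p = q \<and> q = p)" by simp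
      show ?thesis using A_core[OF uc u(2) cd False na] by blast
    next
      case True
      then have ne: "ord u \<noteq> q" using pq by simp
      have cd: "(b = a \<and> a = b \<and> q = p \<and> p = q) \<or> (b = b \<and> a = a \<and> q = q \<and> p = p)" by simp
      show ?thesis using A_core[OF uc u(2) cd ne na(2) na(1)] by blast
    qed
    then show ?thesis using diff_edge_sym diff_vertices_iff by blast
  next
    case ab: False
    show ?thesis
    proof (cases "h \<in> cyc g")
      case False
      have "\<exists>z. z \<noteq> \<one> \<and> z \<in> cyc g \<and> z \<in> C" using ab a_in_C b_in_C a1 b1 by blast
      then have "diff_edge G g h" unfolding diff_edge_iff using g hc False by blast
      then show ?thesis using diff_edge_sym diff_vertices_iff by blast
    next
      case True
      then have "C \<subseteq> cyc g" using cyc_mono g(1) by blast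
      then have "a \<in> cyc g" "b \<in> cyc g" using a_in_C b_in_C by blast+
      then obtain w where w: "w \<in> carrier G" "w \<notin> C"
          "(a \<in> cyc w \<and> b \<notin> cyc w) \<or> (b \<in> cyc w \<and> a \<notin> cyc w)"
        using split_lemma[OF g(1) _ _ Csub g(2)] by blast
      have hw: "h \<notin> cyc w"
      proof
        assume "h \<in> cyc w"
        then have "C \<subseteq> cyc w" using cyc_mono w(1) by blast
        then show False using w(3) a_in_C b_in_C by blast
      qed
      have cw: "\<exists>z. z \<noteq> \<one> \<and> z \<in> cyc w \<and> z \<in> C" using w(3) a_in_C b_in_C a1 b1 by blast
      have "diff_edge G w h" unfolding diff_edge_iff using hc w(1) w(2) hw cw by blast
      then show ?thesis using diff_edge_sym diff_vertices_iff by blast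
    qed
  qed
qed


lemma iso_C:
  assumes cC: "carrier G = C"
  shows "G \<cong> integer_mod_group (p * q)"
proof -
  define n where "n = p * q"
  have n0: "n \<noteq> 0" using pp qp n_def by auto
  have on: "ord h = n" using ord_h n_def by simp
  define f where "f = (\<lambda>k::int. h [^] k)"
  have carZ: "carrier (integer_mod_group n) = {0..<int n}" using n0 by (simp add: carrier_integer_mod_group)
  have hom: "f \<in> hom (integer_mod_group n) G"
  proof (rule homI)
    fix x assume "x \<in> carrier (integer_mod_group n)"
    then show "f x \<in> carrier G" unfolding f_def using hc by simp
  next
    fix x y assume "x \<in> carrier (integer_mod_group n)" "y \<in> carrier (integer_mod_group n)"
    have "h [^] ((x + y) mod int n) = h [^] (x + y)"
      using int_pow_eq[OF hc] on by simp
    also have "\<dots> = h [^] x \<otimes> h [^] y" using int_pow_mult[OF hc] by simp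
    finally show "f (x \<otimes>\<^bsub>integer_mod_group n\<^esub> y) = f x \<otimes> f y" unfolding f_def by simp
  qed
  have inj: "inj_on f {0..<int n}"
  proof (rule inj_onI)
    fix x y assume x: "x \<in> {0..<int n}" and y: "y \<in> {0..<int n}" and e: "f x = f y"
    then have "int n dvd y - x" using int_pow_eq[OF hc] on unfolding f_def by simp
    then have "y mod int n = x mod int n" using mod_eq_dvd_iff by blast
    then show "x = y" using x y by simp
  qed
  have img: "f ` {0..<int n} = carrier G"
  proof
    show "f ` {0..<int n} \<subseteq> carrier G" unfolding f_def using hc by auto
  next
    show "carrier G \<subseteq> f ` {0..<int n}"
    proof
      fix g assume "g \<in> carrier G"
      then obtain k :: int where k: "g = h [^] k" using cC cyc_pow hc by blast
      have "int n dvd (k mod int n - k)" using mod_eq_dvd_iff[of "k mod int n" "int n" k] by simp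
      then have "h [^] k = h [^] (k mod int n)" using int_pow_eq[OF hc] on by simp
      moreover have "k mod int n \<in> {0..<int n}" using n0 by simp
      ultimately show "g \<in> f ` {0..<int n}" unfolding f_def using k by blast
    qed
  qed
  have "f \<in> iso (integer_mod_group n) G"
    unfolding iso_def bij_betw_def using hom inj img carZ by simp
  then have "integer_mod_group n \<cong> G" by (rule is_isoI)
  then have "G \<cong> integer_mod_group n" by (rule group.iso_sym[OF group_integer_mod_group])
  then show ?thesis using n_def by simp
qed

lemma main:
  "(graph_connected (diff_vertices G) (diff_edge G) \<longleftrightarrow>
      \<not> (\<exists>p q::nat. Factorial_Ring.prime p \<and> Factorial_Ring.prime q \<and> G \<cong> integer_mod_group (p * q)))
   \<and> (graph_connected (diff_vertices G) (diff_edge G) \<longrightarrow>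
      graph_diam_le (diff_vertices G) (diff_edge G) 6)"
proof -
  let ?V = "diff_vertices G" and ?E = "diff_edge G"
  have sym: "\<And>x y. ?E x y \<Longrightarrow> ?E y x" using diff_edge_sym by blast
  have join: "\<exists>xs. is_walk ?E xs u v \<and> length xs \<le> Suc 6" if u: "u \<in> ?V" and v: "v \<in> ?V" for u v
  proof -
    obtain xs where xs: "is_walk ?E xs u h" "length xs \<le> 4" using hub u by blast
    obtain ys where ys: "is_walk ?E ys v h" "length ys \<le> 4" using hub v by blast
    have r: "is_walk ?E (rev ys) h v" using walk_rev[OF sym ys(1)] .
    have "is_walk ?E (xs @ tl (rev ys)) u v" using walk_append[OF xs(1) r] .
    moreover have "length (xs @ tl (rev ys)) \<le> Suc 6" using xs(2) ys(2) by simp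
    ultimately show ?thesis by blast
  qed
  have diam: "graph_diam_le ?V ?E 6" unfolding graph_diam_le_def using join by blast
  have conn: "graph_connected ?V ?E" if "?V \<noteq> {}"
    unfolding graph_connected_def using that join by blast
  have iso_empty: "?V = {}" if hyp: "\<exists>p q::nat. Factorial_Ring.prime p \<and> Factorial_Ring.prime q \<and> G \<cong> integer_mod_group (p * q)"
  proof -
    obtain r s :: nat where rs: "Factorial_Ring.prime r" "Factorial_Ring.prime s" "G \<cong> integer_mod_group (r * s)"
      using hyp by blast
    have "r * s \<noteq> 0" using rs by auto
    then have "order (integer_mod_group (r * s)) = r * s"
      unfolding order_def by (simp add: carrier_integer_mod_group nat_mult_distrib)
    moreover obtain f where f: "f \<in> iso G (integer_mod_group (r * s))" using rs(3) unfolding is_iso_def by blast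
    ultimately have "order G = r * s" using iso_same_order[OF f] by simp
    then show ?thesis using no_vertices[OF fin _ rs(1) rs(2)] by blast
  qed
  have noiso: "?V \<noteq> {}" if hyp: "\<not> (\<exists>p q::nat. Factorial_Ring.prime p \<and> Factorial_Ring.prime q \<and> G \<cong> integer_mod_group (p * q))"
  proof -
    have "carrier G \<noteq> C" using iso_C hyp pp qp by blast
    moreover have "C \<subseteq> carrier G" using cyc_carrier hc by blast
    ultimately obtain g where "g \<in> carrier G" "g \<notin> C" by blast
    then show ?thesis using h_vertex by blast
  qed
  have "graph_connected ?V ?E \<longleftrightarrow>
      \<not> (\<exists>p q::nat. Factorial_Ring.prime p \<and> Factorial_Ring.prime q \<and> G \<cong> integer_mod_group (p * q))"
  proof
    assume "graph_connected ?V ?E"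
    then have "?V \<noteq> {}" unfolding graph_connected_def by blast
    then show "\<not> (\<exists>p q::nat. Factorial_Ring.prime p \<and> Factorial_Ring.prime q \<and> G \<cong> integer_mod_group (p * q))"
      using iso_empty by blast
  next
    assume "\<not> (\<exists>p q::nat. Factorial_Ring.prime p \<and> Factorial_Ring.prime q \<and> G \<cong> integer_mod_group (p * q))"
    then show "graph_connected ?V ?E" using noiso conn by blast
  qed
  then show ?thesis using diam by blast
qed

end


theorem theorem4p1:
  fixes G :: "('a, 'b) monoid_scheme"
  assumes "group G" and "finite (carrier G)"
    and "\<exists>p q::nat. Factorial_Ring.prime p \<and> Factorial_Ring.prime q \<and> p \<noteq> q \<and>
            p dvd card (grp_center G) \<and> q dvd card (grp_center G)"
  shows "(graph_connected (diff_vertices G) (diff_edge G) \<longleftrightarrow>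
            \<not> (\<exists>p q::nat. Factorial_Ring.prime p \<and> Factorial_Ring.prime q \<and> G \<cong> integer_mod_group (p * q)))
         \<and> (graph_connected (diff_vertices G) (diff_edge G) \<longrightarrow>
            graph_diam_le (diff_vertices G) (diff_edge G) 6)"
proof -
  interpret group G by (rule assms(1))
  obtain p q :: nat where pq: "Factorial_Ring.prime p" "Factorial_Ring.prime q" "p \<noteq> q"
    "p dvd card (grp_center G)" "q dvd card (grp_center G)" using assms(3) by blast
  obtain a where a: "a \<in> grp_center G" "a \<noteq> \<one>\<^bsub>G\<^esub>" "a [^]\<^bsub>G\<^esub> int p = \<one>\<^bsub>G\<^esub>"
    using center_elem[OF assms(2) pq(1) pq(4)] by blast
  obtain b where b: "b \<in> grp_center G" "b \<noteq> \<one>\<^bsub>G\<^esub>" "b [^]\<^bsub>G\<^esub> int q = \<one>\<^bsub>G\<^esub>"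
    using center_elem[OF assms(2) pq(2) pq(5)] by blast
  have ac: "a \<in> carrier G" "\<And>x. x \<in> carrier G \<Longrightarrow> a \<otimes>\<^bsub>G\<^esub> x = x \<otimes>\<^bsub>G\<^esub> a"
    using a(1) unfolding grp_center_def by auto
  have bc: "b \<in> carrier G" "\<And>x. x \<in> carrier G \<Longrightarrow> b \<otimes>\<^bsub>G\<^esub> x = x \<otimes>\<^bsub>G\<^esub> b"
    using b(1) unfolding grp_center_def by auto
  interpret D: dset G p q a b
    by (unfold_locales) (use assms(2) pq a b ac bc in auto)
  show ?thesis by (rule D.main)
qed

end
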